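(* Let $M'=M[D,K]$ be a compatible minor of the weighted uncertainty matroid $\mathcal{M}$ such that $M'$ contains no non-trivial element $f$ with either (a) $w_f=L_f$ and $f$ a maximum-weight element of some circuit of $M'$, or (b) $w_f=U_f$ and $f$ a minimum-weight element of $E(M')\setminus\mathrm{span}_{M'}(B'\setminus\{f\})$ for some basis $B'$ of $M'$ containing $f$. Let $e$ be a trivial element of $M'$ such that (i) there exists a basis $B$ of $M'$ with $e\in B$ and (ii) $e$ has minimum weight among the elements of $E(M')$ not in $\mathrm{span}_{M'}(B\setminus\{e\})$. Then $M[D,K\cup\{e\}]$ is a compatible minor of $\mathcal{M}$.
   Context: A weighted uncertainty matroid $\mathcal{M}=(E,\mathcal{I},A,w)$ consists of a matroid $M=(E,\mathcal{I})$ on a finite set $E$, for each $e\in E$ a non-empty finite union $A_e$ of bounded real intervals (each open or closed), a weight $w_e\in A_e$, and a query cost $c_e\ge0$. $L_e=\inf A_e$, $U_e=\sup A_e$; $e$ is trivial if $A_e=\{w_e\}$. A minimum-weight basis (MWB) is a basis minimizing total weight. A weight assignment is $w^*$ with $w^*_e\in A_e$, consistent with $Q$ if $w^*_e=w_e$ on $Q$. $Q$ verifies an MWB $B$ if for every weight assignment consistent with $Q$, $B$ is an MWB with respect to it; a certificate for $\mathcal{M}$ is a set verifying some MWB, and $c^*$ denotes the minimum cost $\sum_{e\in Q}c_e$ of a certificate for $\mathcal{M}$. For $D,K\subseteq E$, $M[D,K]$ is the matroid obtained from $M$ by deleting $D$ and contracting $K$, ground set $E(M[D,K])=E\setminus(D\cup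 K)$, weights restricted. $M[D,K]$ is a compatible minor if there is a set $Q$ of cost $c^*$ verifying an MWB $B$ of $\mathcal{M}$ with $K\subseteq B$, $D\cap B=\emptyset$. $\mathrm{span}_N(X)=\{e: r_N(X\cup\{e\})=r_N(X)\}$. *)

theory Defs
  imports Complex_Main
begin

definition matroid :: "'a set \<Rightarrow> ('a set \<Rightarrow> bool) \<Rightarrow> bool" where
  "matroid E indep \<longleftrightarrow>
     finite E \<and> indep {} \<and>
     (\<forall>I. indep I \<longrightarrow> I \<subseteq> E) \<and>
     (\<forall>I J. indep J \<and> I \<subseteq> J \<longrightarrow> indep I) \<and>
     (\<forall>I J. indep I \<and> indep J \<and> card I < card J \<longrightarrow> (\<exists>x\<in>J - I. indep (insert x I)))"

definition mrank :: "('a set \<Rightarrow> bool) \<Rightarrow> 'a set \<Rightarrow> nat" where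
  "mrank indep X = Max (card ` {I. I \<subseteq> X \<and> indep I})"

definition basis :: "'a set \<Rightarrow> ('a set \<Rightarrow> bool) \<Rightarrow> 'a set \<Rightarrow> bool" where
  "basis E indep B \<longleftrightarrow> indep B \<and> (\<forall>x\<in>E - B. \<not> indep (insert x B))"

definition circuit :: "'a set \<Rightarrow> ('a set \<Rightarrow> bool) \<Rightarrow> 'a set \<Rightarrow> bool" where
  "circuit E indep C \<longleftrightarrow> C \<subseteq> E \<and> \<not> indep C \<and> (\<forall>x\<in>C. indep (C - {x}))"

definition mspan :: "'a set \<Rightarrow> ('a set \<Rightarrow> bool) \<Rightarrow> 'a set \<Rightarrow> 'a set" where
  "mspan E indep X = {x\<in>E. mrank indep (insert x X) = mrank indep X}"

text \<open>The minor M[D,K]: delete D, contract K. Ground set E - (D \<union> K); rank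
  r'(X) = r(X \<union> K) - r(K), so I is independent iff r(I \<union> K) = |I| + r(K).\<close>
definition minor_ground :: "'a set \<Rightarrow> 'a set \<Rightarrow> 'a set \<Rightarrow> 'a set" where
  "minor_ground E D K = E - (D \<union> K)"

definition minor_indep :: "'a set \<Rightarrow> ('a set \<Rightarrow> bool) \<Rightarrow> 'a set \<Rightarrow> 'a set \<Rightarrow> 'a set \<Rightarrow> bool" where
  "minor_indep E indep D K I \<longleftrightarrow>
     I \<subseteq> E - (D \<union> K) \<and> mrank indep (I \<union> K) = card I + mrank indep K"

definition oc_interval :: "real set \<Rightarrow> bool" where
  "oc_interval S \<longleftrightarrow> (\<exists>a b. (a \<le> b \<and> S = {a..b}) \<or> (a < b \<and> S = {a<..<b}))"

definition uncertainty_set :: "real set \<Rightarrow> bool" where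
  "uncertainty_set S \<longleftrightarrow> S \<noteq> {} \<and>
     (\<exists>\<F>. finite \<F> \<and> (\<forall>J\<in>\<F>. oc_interval J) \<and> S = \<Union>\<F>)"

definition wum :: "'a set \<Rightarrow> ('a set \<Rightarrow> bool) \<Rightarrow> ('a \<Rightarrow> real set) \<Rightarrow> ('a \<Rightarrow> real)
                     \<Rightarrow> ('a \<Rightarrow> real) \<Rightarrow> bool" where
  "wum E indep A w c \<longleftrightarrow> matroid E indep \<and>
     (\<forall>e\<in>E. uncertainty_set (A e) \<and> w e \<in> A e \<and> c e \<ge> 0)"

definition lower :: "('a \<Rightarrow> real set) \<Rightarrow> 'a \<Rightarrow> real" where
  "lower A e = Inf (A e)"

definition upper :: "('a \<Rightarrow> real set) \<Rightarrow> 'a \<Rightarrow> real" where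
  "upper A e = Sup (A e)"

definition trivial :: "('a \<Rightarrow> real set) \<Rightarrow> ('a \<Rightarrow> real) \<Rightarrow> 'a \<Rightarrow> bool" where
  "trivial A w e \<longleftrightarrow> A e = {w e}"

definition mwb :: "'a set \<Rightarrow> ('a set \<Rightarrow> bool) \<Rightarrow> ('a \<Rightarrow> real) \<Rightarrow> 'a set \<Rightarrow> bool" where
  "mwb E indep v B \<longleftrightarrow> basis E indep B \<and>
     (\<forall>B'. basis E indep B' \<longrightarrow> sum v B \<le> sum v B')"

definition weight_assignment :: "'a set \<Rightarrow> ('a \<Rightarrow> real set) \<Rightarrow> ('a \<Rightarrow> real) \<Rightarrow> bool" where
  "weight_assignment E A v \<longleftrightarrow> (\<forall>e\<in>E. v e \<in> A e)"

definition consistent :: "('a \<Rightarrow> real) \<Rightarrow> 'a set \<Rightarrow> ('a \<Rightarrow> real) \<Rightarrow> bool" where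
  "consistent w Q v \<longleftrightarrow> (\<forall>e\<in>Q. v e = w e)"

definition verifies :: "'a set \<Rightarrow> ('a set \<Rightarrow> bool) \<Rightarrow> ('a \<Rightarrow> real set) \<Rightarrow> ('a \<Rightarrow> real)
                          \<Rightarrow> 'a set \<Rightarrow> 'a set \<Rightarrow> bool" where
  "verifies E indep A w Q B \<longleftrightarrow> Q \<subseteq> E \<and>
     (\<forall>v. weight_assignment E A v \<and> consistent w Q v \<longrightarrow> mwb E indep v B)"

definition certificate :: "'a set \<Rightarrow> ('a set \<Rightarrow> bool) \<Rightarrow> ('a \<Rightarrow> real set) \<Rightarrow> ('a \<Rightarrow> real)
                          \<Rightarrow> 'a set \<Rightarrow> bool" where
  "certificate E indep A w Q \<longleftrightarrow> (\<exists>B. verifies E indep A w Q B)"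

definition opt_cost :: "'a set \<Rightarrow> ('a set \<Rightarrow> bool) \<Rightarrow> ('a \<Rightarrow> real set) \<Rightarrow> ('a \<Rightarrow> real)
                          \<Rightarrow> ('a \<Rightarrow> real) \<Rightarrow> real" where
  "opt_cost E indep A w c = Min {sum c Q | Q. certificate E indep A w Q}"

definition compatible_minor :: "'a set \<Rightarrow> ('a set \<Rightarrow> bool) \<Rightarrow> ('a \<Rightarrow> real set) \<Rightarrow> ('a \<Rightarrow> real)
                          \<Rightarrow> ('a \<Rightarrow> real) \<Rightarrow> 'a set \<Rightarrow> 'a set \<Rightarrow> bool" where
  "compatible_minor E indep A w c D K \<longleftrightarrow>
     (\<exists>Q B. verifies E indep A w Q B \<and> sum c Q = opt_cost E indep A w c \<and>
            K \<subseteq> B \<and> D \<inter> B = {})"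

end

theory Submission
  imports Defs
begin

lemma m_sub: "matroid E ind \<Longrightarrow> ind X \<Longrightarrow> X \<subseteq> E"
  unfolding matroid_def by blast
lemma m_fin: "matroid E ind \<Longrightarrow> ind X \<Longrightarrow> finite X"
  unfolding matroid_def by (meson finite_subset)
lemma m_down: "matroid E ind \<Longrightarrow> ind X \<Longrightarrow> Y \<subseteq> X \<Longrightarrow> ind Y"
  unfolding matroid_def by blast
lemma m_aug: "matroid E ind \<Longrightarrow> ind I \<Longrightarrow> ind J \<Longrightarrow> card I < card J \<Longrightarrow> \<exists>x\<in>J - I. ind (insert x I)"
  unfolding matroid_def by blast
lemma m_empty: "matroid E ind \<Longrightarrow> ind {}"
  unfolding matroid_def by blast
lemma m_finE: "matroid E ind \<Longrightarrow> finite E"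
  unfolding matroid_def by blast

lemma exists_max_card:
  assumes "finite S" "P X0" "X0 \<subseteq> S"
  shows "\<exists>J. P J \<and> J \<subseteq> S \<and> (\<forall>J'. P J' \<and> J' \<subseteq> S \<longrightarrow> card J' \<le> card J)"
proof -
  define Q where "Q = (\<lambda>n. \<exists>J. P J \<and> J \<subseteq> S \<and> card J = n)"
  have q0: "Q (card X0)" using assms unfolding Q_def by blast
  have qb: "\<forall>y. Q y \<longrightarrow> (\<lambda>x. x) y < Suc (card S)" unfolding Q_def using assms(1) card_mono by (metis le_imp_less_Suc)
  obtain n where "Q n" "\<forall>y. Q y \<longrightarrow> y \<le> n" using ex_has_greatest_nat[of Q, OF q0 qb] by auto
  then show ?thesis unfolding Q_def by blast
qed

lemma mrank_eq_card_iff: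
  assumes M: "matroid E ind" and fin: "finite X"
  shows "mrank ind X = card X \<longleftrightarrow> ind X"
proof -
  let ?S = "card ` {I. I \<subseteq> X \<and> ind I}"
  have fS: "finite ?S" using fin by auto
  have ne: "card {} \<in> ?S" using m_empty[OF M] by (auto intro!: image_eqI[where x="{}"])
  have le: "\<forall>n\<in>?S. n \<le> card X" using fin card_mono by blast
  show ?thesis
  proof
    assume "mrank ind X = card X"
    then have "card X \<in> ?S" unfolding mrank_def using Max_in[OF fS] ne by (metis empty_iff)
    then obtain I where "I \<subseteq> X" "ind I" "card I = card X" by auto
    then show "ind X" using card_subset_eq[OF fin] by metis
  next
    assume "ind X"
    then have "card X \<in> ?S" by blast
    then show "mrank ind X = card X" unfolding mrank_def using Max_eqI[OF fS] le by blast
  qed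
qed

lemma mrank_indep: "matroid E ind \<Longrightarrow> ind X \<Longrightarrow> mrank ind X = card X"
  using mrank_eq_card_iff m_fin by blast

lemma in_span: "g \<in> E \<Longrightarrow> g \<in> X \<Longrightarrow> g \<in> mspan E ind X"
  unfolding mspan_def by (simp add: insert_absorb)

lemma not_span_iff:
  assumes M: "matroid E ind" and X: "ind X" and gE: "g \<in> E" and gX: "g \<notin> X"
  shows "g \<notin> mspan E ind X \<longleftrightarrow> ind (insert g X)"
proof -
  have fX: "finite X" using m_fin[OF M X] .
  have rX: "mrank ind X = card X" using mrank_indep[OF M X] .
  have cI: "card (insert g X) = card X + 1" using fX gX by simp
  have A: "ind (insert g X) \<Longrightarrow> g \<notin> mspan E ind X"
  proof -
    assume "ind (insert g X)"
    then have "mrank ind (insert g X) = card X + 1" using mrank_indep[OF M] cI by simp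
    then show "g \<notin> mspan E ind X" unfolding mspan_def using rX by simp
  qed
  have B: "\<not> ind (insert g X) \<Longrightarrow> g \<in> mspan E ind X"
  proof -
    assume nd: "\<not> ind (insert g X)"
    let ?S = "card ` {I. I \<subseteq> insert g X \<and> ind I}"
    have fS: "finite ?S" using fX by auto
    have le: "\<forall>n\<in>?S. n \<le> card X"
    proof
      fix n assume "n \<in> ?S"
      then obtain I where I: "I \<subseteq> insert g X" "ind I" "n = card I" by auto
      have "card I \<le> card (insert g X)" using I fX card_mono by (metis finite_insert)
      moreover have "card I \<noteq> card (insert g X)"
        using I nd card_subset_eq fX by (metis finite_insert)
      ultimately show "n \<le> card X" using I cI by simp
    qed
    have "card X \<in> ?S" using X by blast
    then have "mrank ind (insert g X) = card X" unfolding mrank_def using Max_eqI[OF fS] le by blast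
    then show "g \<in> mspan E ind X" unfolding mspan_def using rX gE by simp
  qed
  show ?thesis using A B by blast
qed

lemma basis_by_card:
  assumes M: "matroid E ind" and B0: "basis E ind B0" and X: "ind X" and c: "card X = card B0"
  shows "basis E ind X"
  unfolding basis_def
proof (intro conjI ballI X notI)
  fix x assume x: "x \<in> E - X" and ix: "ind (insert x X)"
  have "card (insert x X) > card B0" using c x m_fin[OF M X] by simp
  then obtain y where y: "y \<in> insert x X - B0" "ind (insert y B0)"
    using m_aug[OF M _ ix] B0 unfolding basis_def by blast
  then have "y \<in> E" using m_sub[OF M y(2)] by blast
  then show False using y B0 unfolding basis_def by blast
qed

lemma sym_exchange:
  assumes M: "matroid E ind" and B0: "basis E ind B0" and B: "ind B"
    and eB: "e \<in> B" and eB0: "e \<notin> B0"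
  shows "\<exists>f\<in>B0 - B. ind (insert e (B0 - {f})) \<and> ind (insert f (B - {e}))"
proof -
  have eE: "e \<in> E" using m_sub[OF M B] eB by blast
  have iB0: "ind B0" and fB0: "finite B0" using B0 m_fin[OF M] unfolding basis_def by auto
  have finE: "finite E" using m_finE[OF M] .
  define Z where "Z = {f\<in>B0. ind (insert e (B0 - {f}))}"
  have ZB0: "Z \<subseteq> B0" unfolding Z_def by blast
  have Zdep: "\<not> ind (insert e Z)"
  proof
    assume iZ: "ind (insert e Z)"
    obtain J where J: "insert e Z \<subseteq> J \<and> ind J" "J \<subseteq> insert e B0"
      and Jmax: "\<forall>J'. (insert e Z \<subseteq> J' \<and> ind J') \<and> J' \<subseteq> insert e B0 \<longrightarrow> card J' \<le> card J"
      using exists_max_card[of "insert e B0" "\<lambda>J. insert e Z \<subseteq> J \<and> ind J" "insert e Z"] iZ ZB0 fB0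
      by auto
    have "\<not> ind (insert e B0)" using B0 eE eB0 unfolding basis_def by blast
    then have "J \<noteq> insert e B0" using J by blast
    then obtain f where f: "f \<in> insert e B0" "f \<notin> J" using J by blast
    then have fB: "f \<in> B0" "f \<noteq> e" using J by auto
    then have fZ: "f \<notin> Z" using J f by blast
    have JS: "J \<subseteq> insert e (B0 - {f})" using J f by blast
    have cS: "card (insert e (B0 - {f})) = card B0" using fB fB0 eB0
      by (simp add: card_Diff_singleton) (metis One_nat_def Suc_pred card_gt_0_iff empty_iff)
    show False
    proof (cases "card J < card B0")
      case True
      then obtain x where x: "x \<in> B0 - J" "ind (insert x J)" using m_aug[OF M _ iB0] J by blast
      have "insert e Z \<subseteq> insert x J \<and> ind (insert x J)" using x J by blast
      moreover have "insert x J \<subseteq> insert e B0" using x J by blast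
      ultimately have "card (insert x J) \<le> card J" using Jmax by blast
      moreover have "finite J" using m_fin[OF M] J by blast
      ultimately show False using x by simp
    next
      case False
      then have "J = insert e (B0 - {f})" using card_seteq[OF _ JS] fB0 cS by simp
      then have "f \<in> Z" unfolding Z_def using J fB by simp
      then show False using fZ by simp
    qed
  qed
  define I where "I = B - {e}"
  have iI: "ind I" using m_down[OF M B] unfolding I_def by blast
  have fBB: "finite B" using m_fin[OF M B] .
  have cIB: "card I < card B" unfolding I_def using card_Diff1_less[OF fBB eB] .
  show ?thesis
  proof (rule ccontr)
    assume nex: "\<not> ?thesis"
    have noZ: "\<forall>f\<in>Z - I. \<not> ind (insert f I)"
    proof (intro ballI notI)
      fix f assume f: "f \<in> Z - I" "ind (insert f I)"
      have "f \<in> B0 - B" using f eB0 ZB0 unfolding I_def by auto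
      moreover have "ind (insert e (B0 - {f}))" using f unfolding Z_def by blast
      ultimately show False using nex f unfolding I_def by blast
    qed
    have iZ: "ind Z" using m_down[OF M iB0 ZB0] .
    have fIZ: "finite (I \<union> Z)" using fBB fB0 ZB0 unfolding I_def by (meson finite_Diff finite_Un finite_subset)
    obtain J where J: "Z \<subseteq> J \<and> ind J" "J \<subseteq> I \<union> Z"
      and Jmax: "\<forall>J'. (Z \<subseteq> J' \<and> ind J') \<and> J' \<subseteq> I \<union> Z \<longrightarrow> card J' \<le> card J"
      using exists_max_card[OF fIZ, of "\<lambda>J. Z \<subseteq> J \<and> ind J" Z] iZ by auto
    have fJ: "finite J" using m_fin[OF M] J by blast
    have "card J \<le> card I"
    proof (rule ccontr)
      assume "\<not> card J \<le> card I"
      then have "card I < card J" by simp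
      then obtain x where x: "x \<in> J - I" "ind (insert x I)" using m_aug[OF M iI, of J] J by blast
      then show False using noZ J by blast
    qed
    then have "card J < card B" using cIB by simp
    then obtain x where x: "x \<in> B - J" "ind (insert x J)" using m_aug[OF M _ B] J by blast
    show False
    proof (cases "x = e")
      case True
      then have "insert e Z \<subseteq> insert x J" using J by blast
      then have "ind (insert e Z)" by (rule m_down[OF M x(2)])
      then show False using Zdep by simp
    next
      case False
      then have "x \<in> I" using x unfolding I_def by blast
      then have "insert x J \<subseteq> I \<union> Z" using J by blast
      moreover have "Z \<subseteq> insert x J \<and> ind (insert x J)" using x J by blast
      ultimately have "card (insert x J) \<le> card J" using Jmax by blast
      then show False using x fJ by simp
    qed
  qed
qed

lemma minor_indep_iff:
  assumes M: "matroid E ind" and K: "ind K"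
  shows "minor_indep E ind D K I \<longleftrightarrow> I \<subseteq> E - (D \<union> K) \<and> ind (I \<union> K)"
proof (cases "I \<subseteq> E - (D \<union> K)")
  case True
  have fK: "finite K" using m_fin[OF M K] .
  have fI: "finite I" using True m_finE[OF M] finite_subset by blast
  have c: "card (I \<union> K) = card I + card K" using True fI fK by (subst card_Un_disjoint) auto
  show ?thesis unfolding minor_indep_def using mrank_indep[OF M K] mrank_eq_card_iff[OF M, of "I \<union> K"] fI fK c True
    by simp
next
  case False
  then show ?thesis unfolding minor_indep_def by simp
qed

lemma minor_matroid:
  assumes M: "matroid E ind" and K: "ind K"
  shows "matroid (minor_ground E D K) (minor_indep E ind D K)"
proof -
  have fK: "finite K" using m_fin[OF M K] .
  have aug: "\<exists>x\<in>J - I. I \<subseteq> E - (D \<union> K) \<and> x \<in> E - (D \<union> K) \<and> ind (insert x I \<union> K)"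
    if a: "I \<subseteq> E - (D \<union> K)" "ind (I \<union> K)" "J \<subseteq> E - (D \<union> K)" "ind (J \<union> K)" "card I < card J" for I J
  proof -
    have fI: "finite I" "finite J" using a m_finE[OF M] finite_subset by blast+
    have "card (I \<union> K) = card I + card K" using a fI fK by (subst card_Un_disjoint) auto
    moreover have "card (J \<union> K) = card J + card K" using a fI fK by (subst card_Un_disjoint) auto
    ultimately have "card (I \<union> K) < card (J \<union> K)" using a by simp
    then obtain x where x: "x \<in> (J \<union> K) - (I \<union> K)" "ind (insert x (I \<union> K))" using m_aug[OF M] a by blast
    then show ?thesis using a by auto
  qed
  have c1: "finite (minor_ground E D K)" using m_finE[OF M] unfolding minor_ground_def by simp
  have c2: "minor_indep E ind D K {}" unfolding minor_indep_iff[OF M K] using K by simp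
  have c3: "\<forall>I. minor_indep E ind D K I \<longrightarrow> I \<subseteq> minor_ground E D K"
    unfolding minor_indep_iff[OF M K] minor_ground_def by blast
  have c4: "\<forall>I J. minor_indep E ind D K J \<and> I \<subseteq> J \<longrightarrow> minor_indep E ind D K I"
  proof (intro allI impI)
    fix I J assume a: "minor_indep E ind D K J \<and> I \<subseteq> J"
    then have "J \<subseteq> E - (D \<union> K)" "ind (J \<union> K)" "I \<subseteq> J" unfolding minor_indep_iff[OF M K] by auto
    moreover have "I \<union> K \<subseteq> J \<union> K" using \<open>I \<subseteq> J\<close> by blast
    ultimately show "minor_indep E ind D K I" unfolding minor_indep_iff[OF M K]
      using m_down[OF M] by blast
  qed
  have c5: "\<forall>I J. minor_indep E ind D K I \<and> minor_indep E ind D K J \<and> card I < card J \<longrightarrow>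
      (\<exists>x\<in>J - I. minor_indep E ind D K (insert x I))"
  proof (intro allI impI)
    fix I J assume a: "minor_indep E ind D K I \<and> minor_indep E ind D K J \<and> card I < card J"
    then have "I \<subseteq> E - (D \<union> K)" "ind (I \<union> K)" "J \<subseteq> E - (D \<union> K)" "ind (J \<union> K)" "card I < card J"
      unfolding minor_indep_iff[OF M K] by auto
    from aug[OF this] obtain x where x: "x \<in> J - I" "I \<subseteq> E - (D \<union> K)" "x \<in> E - (D \<union> K)" "ind (insert x I \<union> K)"
      by blast
    then have "minor_indep E ind D K (insert x I)" unfolding minor_indep_iff[OF M K] by blast
    then show "\<exists>x\<in>J - I. minor_indep E ind D K (insert x I)" using x(1) by blast
  qed
  show ?thesis unfolding matroid_def using c1 c2 c3 c4 c5 by blast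
qed

lemma sum_swap:
  fixes v :: "'a \<Rightarrow> real"
  assumes "finite B0" "f \<in> B0" "g \<notin> B0"
  shows "sum v (insert g (B0 - {f})) = sum v B0 - v f + v g"
proof -
  have "sum v B0 = v f + sum v (B0 - {f})" using assms(1,2) by (rule sum.remove)
  then show ?thesis using assms by simp
qed

lemma card_swap:
  assumes "finite B0" "f \<in> B0" "g \<notin> B0"
  shows "card (insert g (B0 - {f})) = card B0"
  using assms by (simp add: card_Diff_singleton) (metis card_gt_0_iff empty_iff Suc_pred)

theorem lemma20:
  fixes E :: "'a set" and indep :: "'a set \<Rightarrow> bool"
    and A :: "'a \<Rightarrow> real set" and w c :: "'a \<Rightarrow> real"
    and D K :: "'a set" and e :: 'a
  assumes wum: "wum E indep A w c"
    and compat: "compatible_minor E indep A w c D K"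
    and no_a: "\<not> (\<exists>f\<in>minor_ground E D K. \<not> trivial A w f \<and> w f = lower A f \<and>
                  (\<exists>C. circuit (minor_ground E D K) (minor_indep E indep D K) C \<and> f \<in> C \<and>
                       (\<forall>g\<in>C. w g \<le> w f)))"
    and no_b: "\<not> (\<exists>f\<in>minor_ground E D K. \<not> trivial A w f \<and> w f = upper A f \<and>
                  (\<exists>B'. basis (minor_ground E D K) (minor_indep E indep D K) B' \<and> f \<in> B' \<and>
                    f \<in> minor_ground E D K - mspan (minor_ground E D K) (minor_indep E indep D K) (B' - {f}) \<and>
                    (\<forall>g\<in>minor_ground E D K - mspan (minor_ground E D K) (minor_indep E indep D K) (B' - {f}).
                        w f \<le> w g)))"
    and e_in: "e \<in> minor_ground E D K"
    and e_triv: "trivial A w e"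
    and e_basis: "\<exists>B. basis (minor_ground E D K) (minor_indep E indep D K) B \<and> e \<in> B \<and>
                    (\<forall>g\<in>minor_ground E D K - mspan (minor_ground E D K) (minor_indep E indep D K) (B - {e}).
                        w e \<le> w g)"
  shows "compatible_minor E indep A w c D (K \<union> {e})"
proof -
  let ?E' = "minor_ground E D K"
  let ?I' = "minor_indep E indep D K"
  obtain Q B0 where ver: "verifies E indep A w Q B0" and cost: "sum c Q = opt_cost E indep A w c"
    and KB0: "K \<subseteq> B0" and DB0: "D \<inter> B0 = {}"
    using compat unfolding compatible_minor_def by blast
  have M: "matroid E indep" using wum unfolding wum_def by blast
  have wA: "\<forall>x\<in>E. w x \<in> A x" using wum unfolding wum_def by blast
  have QE: "Q \<subseteq> E" using ver unfolding verifies_def by blast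
  have mwbv: "mwb E indep v B0" if "weight_assignment E A v" "consistent w Q v" for v
    using ver that unfolding verifies_def by blast
  have mwb0: "mwb E indep w B0" using mwbv wA unfolding weight_assignment_def consistent_def by blast
  have bas0: "basis E indep B0" using mwb0 unfolding mwb_def by blast
  have iB0: "indep B0" using bas0 unfolding basis_def by blast
  have B0E: "B0 \<subseteq> E" using m_sub[OF M iB0] .
  have fin0: "finite B0" using m_fin[OF M iB0] .
  have iK: "indep K" using m_down[OF M iB0 KB0] .
  have M': "matroid ?E' ?I'" using minor_matroid[OF M iK] .
  have I'iff: "?I' X \<longleftrightarrow> X \<subseteq> E - (D \<union> K) \<and> indep (X \<union> K)" for X
    using minor_indep_iff[OF M iK] .
  have E'def: "?E' = E - (D \<union> K)" unfolding minor_ground_def ..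
  define B0' where "B0' = B0 - K"
  have B0'K: "B0' \<union> K = B0" unfolding B0'_def using KB0 by blast
  have B0'E': "B0' \<subseteq> ?E'" unfolding B0'_def E'def using B0E DB0 by blast
  have iB0': "?I' B0'" unfolding I'iff using B0'K B0'E' iB0 E'def by simp
  have bas0': "basis ?E' ?I' B0'"
    unfolding basis_def
  proof (intro conjI ballI iB0' notI)
    fix x assume x: "x \<in> ?E' - B0'" and ix: "?I' (insert x B0')"
    have "indep (insert x B0)" using ix B0'K unfolding I'iff by simp
    moreover have "x \<in> E - B0" using x B0'K unfolding E'def by blast
    ultimately show False using bas0 unfolding basis_def by blast
  qed
  have eE: "e \<in> E" "e \<notin> K" "e \<notin> D" using e_in unfolding E'def by auto
  have we: "A e = {w e}" using e_triv unfolding trivial_def .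
  show ?thesis
  proof (cases "e \<in> B0")
    case True
    then show ?thesis unfolding compatible_minor_def using ver cost KB0 DB0 by blast
  next
    case eB0: False
    obtain B where basB: "basis ?E' ?I' B" and eB: "e \<in> B"
      and emin: "\<forall>g\<in>?E' - mspan ?E' ?I' (B - {e}). w e \<le> w g"
      using e_basis by blast
    have iB: "?I' B" using basB unfolding basis_def by blast
    have eB0': "e \<notin> B0'" using eB0 unfolding B0'_def by blast
    obtain f where f: "f \<in> B0' - B" and i1: "?I' (insert e (B0' - {f}))" and i2: "?I' (insert f (B - {e}))"
      using sym_exchange[OF M' bas0' iB eB eB0'] by blast
    have fE': "f \<in> ?E'" using f B0'E' by blast
    have fB0: "f \<in> B0" "f \<notin> K" using f fE' unfolding B0'_def E'def by auto
    have ife: "f \<noteq> e" using f eB by blast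
    have iBe: "?I' (B - {e})" using m_down[OF M' iB] by blast
    have "f \<notin> mspan ?E' ?I' (B - {e})"
      using not_span_iff[OF M' iBe fE'] f i2 by blast
    then have wef: "w e \<le> w f" using emin fE' by blast
    define B1 where "B1 = insert e (B0 - {f})"
    have B1eq: "insert e (B0' - {f}) \<union> K = B1" unfolding B1_def B0'_def using KB0 fB0 by blast
    have iB1: "indep B1" using i1 B1eq unfolding I'iff by simp
    have cB1: "card B1 = card B0" unfolding B1_def using card_swap[OF fin0 fB0(1) eB0] .
    have basB1: "basis E indep B1" using basis_by_card[OF M bas0 iB1 cB1] .
    have sB1: "sum v B1 = sum v B0 - v f + v e" for v :: "'a \<Rightarrow> real"
      unfolding B1_def using sum_swap[OF fin0 fB0(1) eB0] .
    have "sum w B0 \<le> sum w B1" using mwb0 basB1 unfolding mwb_def by blast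
    then have wfe: "w f = w e" using sB1[of w] wef by simp
    have vf: "v f = w f" if va: "weight_assignment E A v" and vc: "consistent w Q v" for v
    proof (cases "f \<in> Q \<or> trivial A w f")
      case True
      then show ?thesis
      proof
        assume "f \<in> Q" then show ?thesis using vc unfolding consistent_def by blast
      next
        assume "trivial A w f"
        then show ?thesis using va fB0 B0E unfolding weight_assignment_def trivial_def by blast
      qed
    next
      case False
      then have fQ: "f \<notin> Q" and ntf: "\<not> trivial A w f" by auto
      have le: "x \<le> w f" if x: "x \<in> A f" for x
      proof -
        define v where "v = w(f := x)"
        have "weight_assignment E A v" unfolding weight_assignment_def v_def using wA x by simp
        moreover have "consistent w Q v" unfolding consistent_def v_def using fQ by auto
        ultimately have "mwb E indep v B0" using mwbv by blast
        then have "sum v B0 \<le> sum v B1" using basB1 unfolding mwb_def by blast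
        then have "v f \<le> v e" using sB1[of v] by simp
        then show ?thesis unfolding v_def using ife wfe by simp
      qed
      have wfA: "w f \<in> A f" using wA fB0 B0E by blast
      have up: "w f = upper A f" unfolding upper_def using cSup_eq_maximum[OF wfA] le by simp
      have iX: "?I' (B0' - {f})" using m_down[OF M' iB0'] by blast
      have fnX: "f \<notin> B0' - {f}" by simp
      have ins: "insert f (B0' - {f}) = B0'" using f by blast
      have fspan: "f \<in> ?E' - mspan ?E' ?I' (B0' - {f})"
        using not_span_iff[OF M' iX fE' fnX] ins iB0' fE' by simp
      have gmin: "\<forall>g\<in>?E' - mspan ?E' ?I' (B0' - {f}). w f \<le> w g"
      proof
        fix g assume g: "g \<in> ?E' - mspan ?E' ?I' (B0' - {f})"
        show "w f \<le> w g"
        proof (cases "g = f")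
          case True then show ?thesis by simp
        next
          case False
          have gE': "g \<in> ?E'" using g by blast
          have gX: "g \<notin> B0' - {f}"
          proof
            assume "g \<in> B0' - {f}"
            then have "g \<in> mspan ?E' ?I' (B0' - {f})" by (rule in_span[OF gE'])
            then show False using g by simp
          qed
          have gK: "g \<notin> K" using gE' E'def by simp
          have gB0: "g \<notin> B0" using gX False gK unfolding B0'_def by simp
          have gns: "g \<notin> mspan ?E' ?I' (B0' - {f})" using g by simp
          have "?I' (insert g (B0' - {f}))" using iffD1[OF not_span_iff[OF M' iX gE' gX] gns] .
          moreover have "insert g (B0' - {f}) \<union> K = insert g (B0 - {f})"
            unfolding B0'_def using KB0 fB0 by blast
          ultimately have ig: "indep (insert g (B0 - {f}))" unfolding I'iff by simp
          have "card (insert g (B0 - {f})) = card B0" using card_swap[OF fin0 fB0(1) gB0] .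
          then have "basis E indep (insert g (B0 - {f}))" using basis_by_card[OF M bas0 ig] by simp
          then have "sum w B0 \<le> sum w (insert g (B0 - {f}))" using mwb0 unfolding mwb_def by blast
          then show ?thesis using sum_swap[OF fin0 fB0(1) gB0, of w] by simp
        qed
      qed
      have "\<exists>f\<in>?E'. \<not> trivial A w f \<and> w f = upper A f \<and>
                  (\<exists>B'. basis ?E' ?I' B' \<and> f \<in> B' \<and>
                    f \<in> ?E' - mspan ?E' ?I' (B' - {f}) \<and>
                    (\<forall>g\<in>?E' - mspan ?E' ?I' (B' - {f}). w f \<le> w g))"
      proof (rule bexI[OF _ fE'], intro conjI ntf up exI[of _ B0'])
        show "basis ?E' ?I' B0'" by (rule bas0')
        show "f \<in> B0'" using f by simp
        show "f \<in> ?E' - mspan ?E' ?I' (B0' - {f})" by (rule fspan)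
        show "\<forall>g\<in>?E' - mspan ?E' ?I' (B0' - {f}). w f \<le> w g" by (rule gmin)
      qed
      then show ?thesis by (rule notE[OF no_b])
    qed
    have ver1: "verifies E indep A w Q B1"
      unfolding verifies_def
    proof (intro conjI QE allI impI)
      fix v assume v: "weight_assignment E A v \<and> consistent w Q v"
      have m0: "mwb E indep v B0" using mwbv v by blast
      have "v e = w e" using v eE we unfolding weight_assignment_def by blast
      moreover have "v f = w f" using vf v by blast
      ultimately have "sum v B1 = sum v B0" using sB1[of v] wfe by simp
      then show "mwb E indep v B1" using m0 basB1 unfolding mwb_def by simp
    qed
    have "K \<union> {e} \<subseteq> B1" unfolding B1_def using KB0 fB0 by blast
    moreover have "D \<inter> B1 = {}" unfolding B1_def using DB0 eE by blast
    ultimately show ?thesis unfolding compatible_minor_def using ver1 cost by blast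
  qed
qed

end
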